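(* For any distribution $D$ on $\mathcal X\times\{-1,1\}$, any self-complemented set $\mathcal H$ of voters $\mathcal X\to[-1,1]$, any prior $P$ on $\mathcal H$, any convex function $\mathcal D:[0,1]\times[0,1]\to\mathbb R$ with $\mathcal D(q,p)=\mathcal D(1-q,1-p)$ for all $q,p$, any $m'>0$ and any $\delta\in(0,1]$, with probability at least $1-\delta$ over $S\sim D^m$, for all posteriors $Q$ aligned on $P$, $$\mathcal D\big(R_S(G_Q),R_D(G_Q)\big)\ \le\ \frac1{m'}\ln\Big(\frac1\delta\,\mathbb E_{S\sim D^m}\mathbb E_{f\sim P}e^{m'\mathcal D(\mathcal L_{\ell,S}(f),\mathcal L_{\ell,D}(f))}\Big).$$
   Context: $\mathcal L_\ell(a,y)=\tfrac12(1-ya)$; $\mathcal L_{\ell,D'}(f)=\mathbb E_{(x,y)\sim D'}\mathcal L_\ell(f(x),y)$ and $R_{D'}(G_Q)=\mathbb E_{f\sim Q}\mathcal L_{\ell,D'}(f)$, for $D'=D$ or $D'=S$ (uniform on the sample). $\mathcal H$ is self-complemented if there is a bijection $c:\mathcal H\to\mathcal H$ with $c(f)=-f$ for all $f$. A distribution $Q$ on $\mathcal H$ is aligned on $P$ if $Q(f)+Q(c(f))=P(f)+P(c(f))$ for all $f\in\mathcal H$ (where $Q(f),P(f)$ are probability masses, or densities with respect to a common reference measure invariant under $c$). $P$ is independent of $S$. *)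

theory Defs
  imports "HOL-Probability.Probability"
begin

definition lin_loss :: "real \<Rightarrow> real \<Rightarrow> real" where
  "lin_loss a y = (1 - y * a) / 2"

definition true_risk :: "('x \<times> real) measure \<Rightarrow> ('x \<Rightarrow> real) \<Rightarrow> real" where
  "true_risk D' f = (\<integral>z. lin_loss (f (fst z)) (snd z) \<partial>D')"

definition emp_risk :: "nat \<Rightarrow> (nat \<Rightarrow> 'x \<times> real) \<Rightarrow> ('x \<Rightarrow> real) \<Rightarrow> real" where
  "emp_risk m S f = (\<Sum>i<m. lin_loss (f (fst (S i))) (snd (S i))) / real m"

text \<open>Risk of the Gibbs classifier G_Q, given a per-voter risk functional L.\<close>
definition gibbs_risk :: "('x \<Rightarrow> real) measure \<Rightarrow> (('x \<Rightarrow> real) \<Rightarrow> real) \<Rightarrow> real" where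
  "gibbs_risk Q L = (\<integral>f. L f \<partial>Q)"

text \<open>Q (density q) is aligned on P (density p) w.r.t. the complement c f = - f.\<close>
definition aligned :: "('x \<Rightarrow> real) set \<Rightarrow> (('x \<Rightarrow> real) \<Rightarrow> real) \<Rightarrow> (('x \<Rightarrow> real) \<Rightarrow> real) \<Rightarrow> bool" where
  "aligned H q p \<longleftrightarrow> (\<forall>f\<in>H. q f + q (\<lambda>x. - f x) = p f + p (\<lambda>x. - f x))"

end

theory Submission
  imports Defs
begin


lemma conv_edge1:
  fixes Dv :: "real \<Rightarrow> real \<Rightarrow> real"
  assumes cv: "convex_on ({0..1} \<times> {0..1}) (\<lambda>(q, r). Dv q r)" and a: "a \<in> {0..1::real}"
  shows "convex_on {0..1} (\<lambda>r. Dv a r)"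
proof (rule convex_onI)
  fix t x y :: real assume t: "0 < t" "t < 1" and xy: "x \<in> {0..1}" "y \<in> {0..1}"
  have "(\<lambda>(q, r). Dv q r) ((1 - t) *\<^sub>R (a, x) + t *\<^sub>R (a, y)) \<le> (1 - t) * (\<lambda>(q, r). Dv q r) (a, x) + t * (\<lambda>(q, r). Dv q r) (a, y)"
    by (rule convex_onD[OF cv]) (use t xy a in auto)
  moreover have "(1 - t) * a + t * a = a" by (simp add: left_diff_distrib)
  ultimately show "Dv a ((1 - t) *\<^sub>R x + t *\<^sub>R y) \<le> (1 - t) * Dv a x + t * Dv a y" by simp
qed (simp add: convex_real_interval)

lemma conv_edge2:
  fixes Dv :: "real \<Rightarrow> real \<Rightarrow> real"
  assumes cv: "convex_on ({0..1} \<times> {0..1}) (\<lambda>(q, r). Dv q r)" and b: "b \<in> {0..1::real}"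
  shows "convex_on {0..1} (\<lambda>q. Dv q b)"
proof (rule convex_onI)
  fix t x y :: real assume t: "0 < t" "t < 1" and xy: "x \<in> {0..1}" "y \<in> {0..1}"
  have "(\<lambda>(q, r). Dv q r) ((1 - t) *\<^sub>R (x, b) + t *\<^sub>R (y, b)) \<le> (1 - t) * (\<lambda>(q, r). Dv q r) (x, b) + t * (\<lambda>(q, r). Dv q r) (y, b)"
    by (rule convex_onD[OF cv]) (use t xy b in auto)
  moreover have "(1 - t) * b + t * b = b" by (simp add: left_diff_distrib)
  ultimately show "Dv ((1 - t) *\<^sub>R x + t *\<^sub>R y) b \<le> (1 - t) * Dv x b + t * Dv y b" by simp
qed (simp add: convex_real_interval)

lemma subgrad1:
  fixes \<psi> :: "real \<Rightarrow> real"
  assumes cv: "convex_on {0..1} \<psi>" and b: "0 < b" "b < 1"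
  shows "\<exists>s. \<forall>y\<in>{0..1}. \<psi> b + s * (y - b) \<le> \<psi> y"
proof -
  have "b \<in> interior {0..1}" using b by simp
  then show ?thesis using convex_le_Inf_differential[OF cv] by blast
qed

lemma subgrad2:
  fixes Dv :: "real \<Rightarrow> real \<Rightarrow> real"
  assumes cv: "convex_on ({0..1} \<times> {0..1}) (\<lambda>(q, r). Dv q r)"
    and ab: "0 < a" "a < 1" "0 < b" "b < (1::real)"
  shows "\<exists>c1 c2. \<forall>x\<in>{0..1}. \<forall>y\<in>{0..1}. Dv a b + c1 * (x - a) + c2 * (y - b) \<le> Dv x y"
proof -
  define S :: "((real \<times> real) \<times> real) set" where
    "S = {((x - a, y - b), t - Dv a b) | x y t. 0 \<le> x \<and> x \<le> 1 \<and> 0 \<le> y \<and> y \<le> 1 \<and> Dv x y < t}"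
  have "convex S"
    unfolding convex_def
  proof (intro ballI allI impI)
    fix z1 z2 and u v :: real assume z: "z1 \<in> S" "z2 \<in> S" and uv: "0 \<le> u" "0 \<le> v" "u + v = 1"
    from z obtain x1 y1 t1 x2 y2 t2 where
      z1: "z1 = ((x1 - a, y1 - b), t1 - Dv a b)" "0 \<le> x1" "x1 \<le> 1" "0 \<le> y1" "y1 \<le> 1" "Dv x1 y1 < t1" and
      z2: "z2 = ((x2 - a, y2 - b), t2 - Dv a b)" "0 \<le> x2" "x2 \<le> 1" "0 \<le> y2" "y2 \<le> 1" "Dv x2 y2 < t2"
      unfolding S_def by blast
    have cvx: "(\<lambda>(q, r). Dv q r) (u *\<^sub>R (x1, y1) + v *\<^sub>R (x2, y2)) \<le> u * (\<lambda>(q, r). Dv q r) (x1, y1) + v * (\<lambda>(q, r). Dv q r) (x2, y2)"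
      using cv z1 z2 uv unfolding convex_on_def by auto
    hence c1: "Dv (u * x1 + v * x2) (u * y1 + v * y2) \<le> u * Dv x1 y1 + v * Dv x2 y2" by simp
    have c2: "u * Dv x1 y1 + v * Dv x2 y2 < u * t1 + v * t2"
    proof (cases "u = 0")
      case True then show ?thesis using uv z2 by simp
    next
      case False then have "u > 0" using uv by simp
      then have "u * Dv x1 y1 < u * t1" using z1 by simp
      moreover have "v * Dv x2 y2 \<le> v * t2" using z2 uv by (simp add: mult_left_mono)
      ultimately show ?thesis by linarith
    qed
    have bnd: "0 \<le> u * x1 + v * x2" "u * x1 + v * x2 \<le> 1" "0 \<le> u * y1 + v * y2" "u * y1 + v * y2 \<le> 1"
      using uv z1 z2 by (auto intro!: convex_bound_le add_nonneg_nonneg mult_nonneg_nonneg)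
    have eq: "u *\<^sub>R z1 + v *\<^sub>R z2 = (((u * x1 + v * x2) - a, (u * y1 + v * y2) - b), (u * t1 + v * t2) - Dv a b)"
      proof -
      have v: "v = 1 - u" using uv by simp
      show ?thesis using z1(1) z2(1) unfolding v by (simp add: algebra_simps)
    qed
    show "u *\<^sub>R z1 + v *\<^sub>R z2 \<in> S"
      unfolding S_def eq using bnd c1 c2 by fastforce
  qed
  moreover have "0 \<notin> S" unfolding S_def by (auto simp: zero_prod_def)
  ultimately obtain n where n: "n \<noteq> 0" "\<forall>z\<in>S. 0 \<le> inner n z"
    using separating_hyperplane_set_0 by blast
  obtain n1 n2 n3 where nn: "n = ((n1, n2), n3)" by (metis prod.collapse)
  have K: "0 \<le> n1 * (x - a) + n2 * (y - b) + n3 * (t - Dv a b)"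
    if "0 \<le> x" "x \<le> 1" "0 \<le> y" "y \<le> 1" "Dv x y < t" for x y t
  proof -
    have "((x - a, y - b), t - Dv a b) \<in> S" unfolding S_def using that by blast
    with n(2) show ?thesis by (auto simp: nn inner_Pair)
  qed
  have n3: "0 \<le> n3" using K[of a b "Dv a b + 1"] ab by simp
  define e where "e = min a (1 - a)"
  define d where "d = min b (1 - b)"
  have e: "0 < e" "0 \<le> a - e" "a + e \<le> 1" using ab by (auto simp: e_def)
  have d: "0 < d" "0 \<le> b - d" "b + d \<le> 1" using ab by (auto simp: d_def)
  have "n3 \<noteq> 0"
  proof
    assume z: "n3 = 0"
    have "0 \<le> n1 * e" using K[of "a + e" b "Dv (a + e) b + 1"] e ab z by simp
    moreover have "0 \<le> - n1 * e" using K[of "a - e" b "Dv (a - e) b + 1"] e ab z by simp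
    ultimately have "n1 * e = 0" by linarith
    hence n1: "n1 = 0" using e by simp
    have "0 \<le> n2 * d" using K[of a "b + d" "Dv a (b + d) + 1"] d ab z by simp
    moreover have "0 \<le> - n2 * d" using K[of a "b - d" "Dv a (b - d) + 1"] d ab z by simp
    ultimately have "n2 * d = 0" by linarith
    hence "n2 = 0" using d by simp
    with n1 z nn n(1) show False by (simp add: zero_prod_def)
  qed
  with n3 have n3p: "0 < n3" by simp
  show ?thesis
  proof (intro exI ballI)
    fix x y :: real assume xy: "x \<in> {0..1}" "y \<in> {0..1}"
    show "Dv a b + - n1 / n3 * (x - a) + - n2 / n3 * (y - b) \<le> Dv x y"
    proof (rule field_le_epsilon)
      fix \<epsilon> :: real assume \<epsilon>: "0 < \<epsilon>"
      have "0 \<le> n1 * (x - a) + n2 * (y - b) + n3 * (Dv x y + \<epsilon> - Dv a b)"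
        using K[of x y "Dv x y + \<epsilon>"] xy \<epsilon> by simp
      hence "0 \<le> (n1 * (x - a) + n2 * (y - b) + n3 * (Dv x y + \<epsilon> - Dv a b)) / n3"
        using n3p by simp
      moreover have "Dv a b + - n1 / n3 * (x - a) + - n2 / n3 * (y - b) = Dv x y + \<epsilon> - (n1 * (x - a) + n2 * (y - b) + n3 * (Dv x y + \<epsilon> - Dv a b)) / n3"
        using n3p by (simp add: field_simps)
      ultimately show "Dv a b + - n1 / n3 * (x - a) + - n2 / n3 * (y - b) \<le> Dv x y + \<epsilon>"
        by (metis diff_le_eq le_add_same_cancel1)
    qed
  qed
qed



lemma borel_times_set:
  fixes A B :: "real set"
  assumes "A \<in> sets borel" "B \<in> sets borel"
  shows "A \<times> B \<in> sets (borel :: (real \<times> real) measure)"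
proof -
  have "A \<times> B \<in> sets (borel \<Otimes>\<^sub>M borel)" using assms by (rule pair_measureI)
  thus ?thesis unfolding borel_prod .
qed

lemma Dv_meas:
  fixes Dv :: "real \<Rightarrow> real \<Rightarrow> real"
  assumes cv: "convex_on ({0..1} \<times> {0..1}) (\<lambda>(q, r). Dv q r)"
  shows "\<exists>g \<in> borel_measurable (borel :: (real \<times> real) measure). \<forall>x\<in>{0..1}. \<forall>y\<in>{0..1}. g (x, y) = Dv x y"
proof -
  define I where "I = {0<..<1::real}"
  define f where "f = (\<lambda>z::real\<times>real. Dv (fst z) (snd z))"
  define C :: "(real \<times> real) set" where "C = {0,1} \<times> {0,1}"
  have fcase: "f = (\<lambda>(q, r). Dv q r)" by (simp add: f_def case_prod_unfold)
  have I: "open I" "I \<in> sets borel" "convex I" "I \<subseteq> {0..1}" by (auto simp: I_def convex_real_interval)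
  have s01: "{0::real} \<in> sets borel" "{1::real} \<in> sets borel" by auto
  have c1: "continuous_on (I \<times> I) f"
  proof (rule convex_on_continuous)
    show "open (I \<times> I)" using I by (simp add: open_Times)
    show "convex_on (I \<times> I) f" unfolding fcase
      by (rule convex_on_subset[OF cv]) (use I in \<open>auto intro: convex_Times\<close>)
  qed
  have c2: "continuous_on ({a} \<times> I) f" if a: "a \<in> {0..1}" for a
  proof -
    have "continuous_on I (Dv a)"
      by (rule convex_on_continuous[OF I(1)], rule convex_on_subset[OF conv_edge1[OF cv a]]) (use I in auto)
    hence "continuous_on ({a} \<times> I) (\<lambda>z. Dv a (snd z))"
      by (rule continuous_on_compose2) (auto intro: continuous_intros)
    thus ?thesis by (rule continuous_on_cong[THEN iffD1, rotated 2]) (auto simp: f_def)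
  qed
  have c3: "continuous_on (I \<times> {b}) f" if b: "b \<in> {0..1}" for b
  proof -
    have "continuous_on I (\<lambda>q. Dv q b)"
      by (rule convex_on_continuous[OF I(1)], rule convex_on_subset[OF conv_edge2[OF cv b]]) (use I in auto)
    hence "continuous_on (I \<times> {b}) (\<lambda>z. Dv (fst z) b)"
      by (rule continuous_on_compose2) (auto intro: continuous_intros)
    thus ?thesis by (rule continuous_on_cong[THEN iffD1, rotated 2]) (auto simp: f_def)
  qed
  have mC: "(\<lambda>z. indicator C z *\<^sub>R f z) \<in> borel_measurable borel"
  proof (rule borel_measurable_continuous_countable_exceptions)
    show "countable C" by (simp add: C_def)
    have "continuous_on (- C) (\<lambda>z. 0::real)" by simp
    thus "continuous_on (- C) (\<lambda>z. indicator C z *\<^sub>R f z)"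
      by (rule continuous_on_cong[THEN iffD1, rotated 2]) auto
  qed
  define g where "g = (\<lambda>z. indicator (I \<times> I) z *\<^sub>R f z + indicator ({0} \<times> I) z *\<^sub>R f z
     + indicator ({1} \<times> I) z *\<^sub>R f z + indicator (I \<times> {0}) z *\<^sub>R f z + indicator (I \<times> {1}) z *\<^sub>R f z
     + indicator C z *\<^sub>R f z)"
  have "g \<in> borel_measurable borel"
    unfolding g_def
    apply (intro borel_measurable_add mC)
    apply (rule borel_measurable_continuous_on_indicator[OF borel_times_set[OF I(2) I(2)] c1])
    apply (rule borel_measurable_continuous_on_indicator[OF borel_times_set[OF s01(1) I(2)] c2], simp)
    apply (rule borel_measurable_continuous_on_indicator[OF borel_times_set[OF s01(2) I(2)] c2], simp)
    apply (rule borel_measurable_continuous_on_indicator[OF borel_times_set[OF I(2) s01(1)] c3], simp)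
    apply (rule borel_measurable_continuous_on_indicator[OF borel_times_set[OF I(2) s01(2)] c3], simp)
    done
  moreover have "\<forall>x\<in>{0..1}. \<forall>y\<in>{0..1}. g (x, y) = Dv x y"
  proof (intro ballI)
    fix x y :: real assume "x \<in> {0..1}" "y \<in> {0..1}"
    then have "(x = 0 \<or> x = 1 \<or> x \<in> I) \<and> (y = 0 \<or> y = 1 \<or> y \<in> I)" by (auto simp: I_def)
    then show "g (x, y) = Dv x y"
      by (elim conjE disjE) (auto simp: g_def C_def f_def indicator_def I_def)
  qed
  ultimately show ?thesis by blast
qed



lemma minorant:
  fixes Dv :: "real \<Rightarrow> real \<Rightarrow> real"
  assumes cv: "convex_on ({0..1} \<times> {0..1}) (\<lambda>(q, r). Dv q r)"
    and a: "a \<in> {0..1}" and b: "b \<in> {0..1}"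
  shows "\<exists>c0 c1 c2. c0 + c1 * a + c2 * b = Dv a b \<and>
     (\<forall>x\<in>(if a = 0 \<or> a = 1 then {a} else {0..1}). \<forall>y\<in>(if b = 0 \<or> b = 1 then {b} else {0..1}).
        c0 + c1 * x + c2 * y \<le> Dv x y)"
proof (cases "a = 0 \<or> a = 1")
  case ea: True
  show ?thesis
  proof (cases "b = 0 \<or> b = 1")
    case True
    show ?thesis by (rule exI[of _ "Dv a b"], rule exI[of _ 0], rule exI[of _ 0]) (use ea True in auto)
  next
    case False
    then have b': "0 < b" "b < 1" using b by auto
    obtain s where s: "\<forall>y\<in>{0..1}. Dv a b + s * (y - b) \<le> Dv a y"
      using subgrad1[OF conv_edge1[OF cv a] b'] by blast
    show ?thesis
      by (rule exI[of _ "Dv a b - s * b"], rule exI[of _ 0], rule exI[of _ s])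
         (use ea False s in \<open>auto simp: algebra_simps\<close>)
  qed
next
  case na: False
  then have a': "0 < a" "a < 1" using a by auto
  show ?thesis
  proof (cases "b = 0 \<or> b = 1")
    case True
    obtain s where s: "\<forall>x\<in>{0..1}. Dv a b + s * (x - a) \<le> Dv x b"
      using subgrad1[OF conv_edge2[OF cv b] a'] by blast
    show ?thesis
      by (rule exI[of _ "Dv a b - s * a"], rule exI[of _ s], rule exI[of _ 0])
         (use na True s in \<open>auto simp: algebra_simps\<close>)
  next
    case False
    then have b': "0 < b" "b < 1" using b by auto
    obtain c1 c2 where c: "\<forall>x\<in>{0..1}. \<forall>y\<in>{0..1}. Dv a b + c1 * (x - a) + c2 * (y - b) \<le> Dv x y"
      using subgrad2[OF cv a' b'] by blast
    show ?thesis
      by (rule exI[of _ "Dv a b - c1 * a - c2 * b"], rule exI[of _ c1], rule exI[of _ c2])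
         (use na False c in \<open>auto simp: algebra_simps\<close>)
  qed
qed



lemma ennreal_double_cancel:
  fixes x y :: ennreal
  assumes "x + x = y + y" shows "x = y"
proof -
  have "2 * x = 2 * y" using assms by (simp add: mult_2)
  thus ?thesis by (simp add: ennreal_mult_cancel_left)
qed

lemma sym_nn_integral:
  fixes HM \<mu> :: "('x \<Rightarrow> real) measure" and p q :: "('x \<Rightarrow> real) \<Rightarrow> real"
    and h :: "('x \<Rightarrow> real) \<Rightarrow> ennreal"
  assumes c_meas: "(\<lambda>f x. - f x) \<in> measurable HM HM"
    and \<mu>_sets: "sets \<mu> = sets HM"
    and \<mu>_inv: "distr \<mu> HM (\<lambda>f x. - f x) = \<mu>"
    and p_meas: "p \<in> borel_measurable HM" and p_nonneg: "\<forall>f\<in>space HM. 0 \<le> p f"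
    and q_meas: "q \<in> borel_measurable HM" and q_nonneg: "\<forall>f\<in>space HM. 0 \<le> q f"
    and al: "aligned (space HM) q p"
    and h_meas: "h \<in> borel_measurable HM"
    and hsym: "\<forall>f\<in>space HM. h (\<lambda>x. - f x) = h f"
  shows "(\<integral>\<^sup>+ f. h f \<partial>density \<mu> (\<lambda>x. ennreal (q x))) = (\<integral>\<^sup>+ f. h f \<partial>density \<mu> (\<lambda>x. ennreal (p x)))"
proof -
  define c where "c = (\<lambda>(f::'x \<Rightarrow> real) x. - f x)"
  have sp: "space \<mu> = space HM" using \<mu>_sets by (rule sets_eq_imp_space_eq)
  have cm: "c \<in> measurable \<mu> HM" using c_meas unfolding c_def by (simp add: measurable_cong_sets[OF \<mu>_sets refl])
  have hm: "h \<in> borel_measurable \<mu>" using h_meas by (simp add: measurable_cong_sets[OF \<mu>_sets refl])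
  have pm: "p \<in> borel_measurable \<mu>" using p_meas by (simp add: measurable_cong_sets[OF \<mu>_sets refl])
  have qm: "q \<in> borel_measurable \<mu>" using q_meas by (simp add: measurable_cong_sets[OF \<mu>_sets refl])
  have cspace: "c f \<in> space HM" if "f \<in> space HM" for f
    using c_meas that unfolding c_def measurable_def by auto
  have reflc: "(\<integral>\<^sup>+ f. ennreal (r f) * h f \<partial>\<mu>) = (\<integral>\<^sup>+ f. ennreal (r (c f)) * h f \<partial>\<mu>)"
    if rm: "r \<in> borel_measurable HM" for r :: "('x \<Rightarrow> real) \<Rightarrow> real"
  proof -
    have "(\<integral>\<^sup>+ f. ennreal (r f) * h f \<partial>\<mu>) = (\<integral>\<^sup>+ f. ennreal (r f) * h f \<partial>distr \<mu> HM c)"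
      using \<mu>_inv unfolding c_def by simp
    also have "\<dots> = (\<integral>\<^sup>+ f. ennreal (r (c f)) * h (c f) \<partial>\<mu>)"
      by (rule nn_integral_distr[OF cm]) (use rm h_meas in simp)
    also have "\<dots> = (\<integral>\<^sup>+ f. ennreal (r (c f)) * h f \<partial>\<mu>)"
      by (rule nn_integral_cong) (use hsym sp in \<open>simp add: c_def\<close>)
    finally show ?thesis .
  qed
  have cmm: "c \<in> measurable HM HM" using c_meas by (simp add: c_def)
  have sum: "(\<integral>\<^sup>+ f. ennreal (r f) * h f \<partial>\<mu>) + (\<integral>\<^sup>+ f. ennreal (r f) * h f \<partial>\<mu>)
      = (\<integral>\<^sup>+ f. ennreal (r f + r (c f)) * h f \<partial>\<mu>)"
    if rm: "r \<in> borel_measurable HM" and rn: "\<forall>f\<in>space HM. 0 \<le> r f" for r :: "('x \<Rightarrow> real) \<Rightarrow> real"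
  proof -
    have rcm: "(\<lambda>f. r (c f)) \<in> borel_measurable HM" using measurable_comp[OF cmm rm] by (simp add: o_def)
    have "(\<integral>\<^sup>+ f. ennreal (r f) * h f \<partial>\<mu>) + (\<integral>\<^sup>+ f. ennreal (r f) * h f \<partial>\<mu>)
       = (\<integral>\<^sup>+ f. ennreal (r f) * h f \<partial>\<mu>) + (\<integral>\<^sup>+ f. ennreal (r (c f)) * h f \<partial>\<mu>)"
      using reflc[OF rm] by simp
    also have "\<dots> = (\<integral>\<^sup>+ f. ennreal (r f) * h f + ennreal (r (c f)) * h f \<partial>\<mu>)"
      by (rule nn_integral_add[symmetric]) (use rm rcm h_meas in \<open>simp_all add: measurable_cong_sets[OF \<mu>_sets refl]\<close>)
    also have "\<dots> = (\<integral>\<^sup>+ f. ennreal (r f + r (c f)) * h f \<partial>\<mu>)"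
      by (rule nn_integral_cong) (use rn cspace sp in \<open>simp add: ennreal_plus distrib_right\<close>)
    finally show ?thesis .
  qed
  have eq: "(\<integral>\<^sup>+ f. ennreal (q f + q (c f)) * h f \<partial>\<mu>) = (\<integral>\<^sup>+ f. ennreal (p f + p (c f)) * h f \<partial>\<mu>)"
    by (rule nn_integral_cong) (use al sp in \<open>simp add: aligned_def c_def\<close>)
  have "(\<integral>\<^sup>+ f. ennreal (q f) * h f \<partial>\<mu>) = (\<integral>\<^sup>+ f. ennreal (p f) * h f \<partial>\<mu>)"
    by (rule ennreal_double_cancel) (simp add: sum[OF q_meas q_nonneg] sum[OF p_meas p_nonneg] eq)
  moreover have "integral\<^sup>N (density \<mu> (\<lambda>x. ennreal (q x))) h = (\<integral>\<^sup>+ f. ennreal (q f) * h f \<partial>\<mu>)"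
    using qm hm by (intro nn_integral_density) measurable
  moreover have "integral\<^sup>N (density \<mu> (\<lambda>x. ennreal (p x))) h = (\<integral>\<^sup>+ f. ennreal (p f) * h f \<partial>\<mu>)"
    using pm hm by (intro nn_integral_density) measurable
  ultimately show ?thesis by simp
qed



lemma AE_face:
  fixes Q :: "'a measure" and v :: "'a \<Rightarrow> real"
  assumes Q: "prob_space Q" and vm: "v \<in> borel_measurable Q"
    and vr: "\<forall>x\<in>space Q. v x \<in> {0..1}"
  shows "AE x in Q. v x \<in> (if integral\<^sup>L Q v = 0 \<or> integral\<^sup>L Q v = 1 then {integral\<^sup>L Q v} else {0..1})"
proof -
  interpret prob_space Q by (rule Q)
  have iv: "integrable Q v"
    by (rule integrable_const_bound[where B=1]) (use vr vm in auto)
  have iv': "integrable Q (\<lambda>x. 1 - v x)" using iv by simp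
  show ?thesis
  proof (cases "integral\<^sup>L Q v = 0")
    case True
    have "AE x in Q. v x = 0"
      using integral_nonneg_eq_0_iff_AE[OF iv] True vr by auto
    then show ?thesis by eventually_elim (use True in auto)
  next
    case F0: False
    show ?thesis
    proof (cases "integral\<^sup>L Q v = 1")
      case True
      have "integral\<^sup>L Q (\<lambda>x. 1 - v x) = 0" using True iv by (simp add: prob_space)
      hence "AE x in Q. 1 - v x = 0"
        using integral_nonneg_eq_0_iff_AE[OF iv'] vr by auto
      then show ?thesis by eventually_elim (use True in auto)
    next
      case False
      show ?thesis using F0 False vr by (auto intro!: AE_I2)
    qed
  qed
qed

theorem mainTheorem13:
  fixes X :: "'x measure"
    and D :: "('x \<times> real) measure"
    and HM :: "('x \<Rightarrow> real) measure"
    and \<mu> :: "('x \<Rightarrow> real) measure"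
    and p :: "('x \<Rightarrow> real) \<Rightarrow> real"
    and Dv :: "real \<Rightarrow> real \<Rightarrow> real"
    and m :: nat and m' :: real and \<delta> :: real
  assumes D_prob: "prob_space D"
    and D_sets: "sets D = sets (X \<Otimes>\<^sub>M count_space {-1, 1})"
    and H_voters: "\<forall>f\<in>space HM. \<forall>x\<in>space X. f x \<in> {-1..1}"
    and H_eval_meas: "(\<lambda>(f, x). f x) \<in> borel_measurable (HM \<Otimes>\<^sub>M X)"
    and H_selfcompl: "\<forall>f\<in>space HM. (\<lambda>x. - f x) \<in> space HM"
    and c_meas: "(\<lambda>f x. - f x) \<in> measurable HM HM"
    and \<mu>_sets: "sets \<mu> = sets HM"
    and \<mu>_inv: "distr \<mu> HM (\<lambda>f x. - f x) = \<mu>"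
    and p_meas: "p \<in> borel_measurable HM"
    and p_nonneg: "\<forall>f\<in>space HM. 0 \<le> p f"
    and P_prob: "prob_space (density \<mu> p)"
    and Dv_convex: "convex_on ({0..1} \<times> {0..1}) (\<lambda>(q, r). Dv q r)"
    and Dv_sym: "\<forall>q\<in>{0..1}. \<forall>r\<in>{0..1}. Dv q r = Dv (1 - q) (1 - r)"
    and m_pos: "0 < m"
    and m'_pos: "0 < m'"
    and \<delta>_pos: "0 < \<delta>" and \<delta>_le1: "\<delta> \<le> 1"
  shows "\<exists>A\<in>sets (PiM {..<m} (\<lambda>_. D)).
           measure (PiM {..<m} (\<lambda>_. D)) A \<ge> 1 - \<delta> \<and>
           (\<forall>S\<in>A. \<forall>q. q \<in> borel_measurable HM \<and> (\<forall>f\<in>space HM. 0 \<le> q f)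
                   \<and> prob_space (density \<mu> q) \<and> aligned (space HM) q p \<longrightarrow>
              (let E = (\<integral>\<^sup>+ S'. (\<integral>\<^sup>+ f. ennreal (exp (m' * Dv (emp_risk m S' f) (true_risk D f)))
                                  \<partial>(density \<mu> p)) \<partial>(PiM {..<m} (\<lambda>_. D)))
               in E = \<top> \<or>
                  Dv (gibbs_risk (density \<mu> q) (emp_risk m S))
                     (gibbs_risk (density \<mu> q) (true_risk D))
                  \<le> (1 / m') * ln ((1 / \<delta>) * enn2real E)))"
proof -
  interpret Dp: prob_space D by (rule D_prob)
  define M where "M = PiM {..<m} (\<lambda>_. D)"
  interpret Mp: prob_space M unfolding M_def by (intro prob_space_PiM D_prob)
  define P where "P = density \<mu> (\<lambda>x. ennreal (p x))"
  interpret Pp: prob_space P unfolding P_def by (rule P_prob)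
  have spD: "space D = space X \<times> {-1, 1}"
    using sets_eq_imp_space_eq[OF D_sets] by (simp add: space_pair_measure)
  have sp_mu: "space \<mu> = space HM" using \<mu>_sets by (rule sets_eq_imp_space_eq)
  have setsP: "sets P = sets HM" unfolding P_def using \<mu>_sets by simp
  have spP: "space P = space HM" using setsP by (rule sets_eq_imp_space_eq)
  have spM: "space M = (\<Pi>\<^sub>E i\<in>{..<m}. space D)" unfolding M_def by (simp add: space_PiM)
  have eval: "(\<lambda>w. g w (h w)) \<in> borel_measurable N"
    if g: "g \<in> measurable N HM" and h: "h \<in> measurable N X" for N :: "'z measure" and g h
  proof -
    have "(\<lambda>w. (g w, h w)) \<in> measurable N (HM \<Otimes>\<^sub>M X)" using g h by (rule measurable_Pair)
    from measurable_compose[OF this H_eval_meas] show ?thesis by simp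
  qed
  have fstD: "fst \<in> measurable D X"
    using measurable_fst[of X "count_space {-1, 1::real}"] by (simp add: measurable_cong_sets[OF D_sets refl])
  have sndD: "snd \<in> borel_measurable D"
  proof -
    have "snd \<in> measurable (X \<Otimes>\<^sub>M count_space {-1, 1::real}) (count_space {-1, 1})" by simp
    moreover have "(\<lambda>y::real. y) \<in> measurable (count_space {-1, 1}) borel" by simp
    ultimately have "(\<lambda>z. snd z) \<in> measurable (X \<Otimes>\<^sub>M count_space {-1, 1::real}) borel"
      by (rule measurable_compose)
    thus ?thesis by (simp add: measurable_cong_sets[OF D_sets refl])
  qed
  have linm: "(\<lambda>w. lin_loss (A w) (Y w)) \<in> borel_measurable N"
    if "A \<in> borel_measurable N" "Y \<in> borel_measurable N" for N :: "'z measure" and A Y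
    unfolding lin_loss_def using that by measurable
  have lin_range: "lin_loss a y \<in> {0..1}" if "a \<in> {-1..1}" "y \<in> {-1, 1}" for a y
    using that by (auto simp: lin_loss_def)
  have lin_neg: "lin_loss (- a) y = 1 - lin_loss a y" for a y
    by (simp add: lin_loss_def field_simps)
  have joint2: "(\<lambda>(f, z). lin_loss (f (fst z)) (snd z)) \<in> borel_measurable (HM \<Otimes>\<^sub>M D)"
  proof -
    have "(\<lambda>w. fst w (fst (snd w))) \<in> borel_measurable (HM \<Otimes>\<^sub>M D)"
      by (rule eval) (auto intro: measurable_compose[OF measurable_snd fstD])
    moreover have "(\<lambda>w. snd (snd w)) \<in> borel_measurable (HM \<Otimes>\<^sub>M D)"
      by (rule measurable_compose[OF measurable_snd sndD])
    ultimately show ?thesis using linm by (simp add: case_prod_unfold)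
  qed
  have u2m: "(\<lambda>f. true_risk D f) \<in> borel_measurable HM"
    unfolding true_risk_def by (rule Dp.borel_measurable_lebesgue_integral) (use joint2 in simp)
  have lf_meas: "(\<lambda>z. lin_loss (f (fst z)) (snd z)) \<in> borel_measurable D" if f: "f \<in> space HM" for f
    by (rule linm[OF eval sndD]) (use f fstD in auto)
  have lf_range: "lin_loss (f (fst z)) (snd z) \<in> {0..1}" if "f \<in> space HM" "z \<in> space D" for f z
    using that spD H_voters by (intro lin_range) auto
  have lf_int: "integrable D (\<lambda>z. lin_loss (f (fst z)) (snd z))" if f: "f \<in> space HM" for f
    by (rule Dp.integrable_const_bound[where B=1]) (use lf_meas[OF f] lf_range[OF f] in auto)
  have u2_range: "true_risk D f \<in> {0..1}" if f: "f \<in> space HM" for f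
  proof -
    have "0 \<le> true_risk D f" unfolding true_risk_def
      by (rule integral_nonneg_AE) (use lf_range[OF f] in auto)
    moreover have "true_risk D f \<le> 1" unfolding true_risk_def
      by (rule Dp.integral_le_const[OF lf_int[OF f]]) (use lf_range[OF f] in auto)
    ultimately show ?thesis by simp
  qed
  have u2_neg: "true_risk D (\<lambda>x. - f x) = 1 - true_risk D f" if f: "f \<in> space HM" for f
  proof -
    have "true_risk D (\<lambda>x. - f x) = (\<integral>z. 1 - lin_loss (f (fst z)) (snd z) \<partial>D)"
      unfolding true_risk_def by (simp add: lin_neg)
    also have "\<dots> = 1 - true_risk D f"
      unfolding true_risk_def using lf_int[OF f] by (simp add: Dp.prob_space)
    finally show ?thesis .
  qed
  have joint1: "(\<lambda>(S, f). emp_risk m S f) \<in> borel_measurable (M \<Otimes>\<^sub>M HM)"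
  proof -
    have comp: "(\<lambda>w. fst w i) \<in> measurable (M \<Otimes>\<^sub>M HM) D" if i: "i < m" for i
      using measurable_compose[OF measurable_fst measurable_component_singleton[of i "{..<m}" "\<lambda>_. D"]] i
      by (simp add: M_def)
    have "(\<lambda>w. lin_loss (snd w (fst (fst w i))) (snd (fst w i))) \<in> borel_measurable (M \<Otimes>\<^sub>M HM)"
      if i: "i < m" for i
      by (intro linm eval measurable_snd measurable_compose[OF comp[OF i] fstD] measurable_compose[OF comp[OF i] sndD])
    hence "(\<lambda>w. (\<Sum>i<m. lin_loss (snd w (fst (fst w i))) (snd (fst w i))) / real m) \<in> borel_measurable (M \<Otimes>\<^sub>M HM)"
      by (intro borel_measurable_divide borel_measurable_sum borel_measurable_const) auto
    thus ?thesis by (simp add: emp_risk_def case_prod_unfold)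
  qed
  have u1_range: "emp_risk m S f \<in> {0..1}" if S: "S \<in> space M" and f: "f \<in> space HM" for S f
  proof -
    have r: "lin_loss (f (fst (S i))) (snd (S i)) \<in> {0..1}" if "i < m" for i
      using S that spM by (intro lf_range[OF f]) auto
    have "0 \<le> (\<Sum>i<m. lin_loss (f (fst (S i))) (snd (S i)))" using r by (intro sum_nonneg) auto
    moreover have "(\<Sum>i<m. lin_loss (f (fst (S i))) (snd (S i))) \<le> of_nat (card {..<m}) * 1"
      using r by (intro sum_bounded_above) auto
    ultimately show ?thesis using m_pos by (simp add: emp_risk_def)
  qed
  have u1_neg: "emp_risk m S (\<lambda>x. - f x) = 1 - emp_risk m S f" for S f
    using m_pos by (simp add: emp_risk_def lin_neg sum_subtractf diff_divide_distrib)

  have expm: "ennreal (exp (m' * x)) \<le> ennreal (exp (m' * y))" if "x \<le> y" for x y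
    using that m'_pos by (intro ennreal_leI) (simp add: mult_left_mono)
  obtain gD :: "real \<times> real \<Rightarrow> real" where gDm: "gD \<in> borel_measurable borel"
    and gD: "\<forall>x\<in>{0..1}. \<forall>y\<in>{0..1}. gD (x, y) = Dv x y"
    using Dv_meas[OF Dv_convex] by blast
  define G where "G = (\<lambda>S f. ennreal (exp (m' * Dv (emp_risk m S f) (true_risk D f))))"
  define F where "F = (\<lambda>S. \<integral>\<^sup>+ f. G S f \<partial>P)"
  have Gm: "(\<lambda>(S, f). G S f) \<in> borel_measurable (M \<Otimes>\<^sub>M P)"
  proof -
    have m1: "(\<lambda>w. emp_risk m (fst w) (snd w)) \<in> borel_measurable (M \<Otimes>\<^sub>M HM)"
      using joint1 by (simp add: case_prod_unfold)
    have m2: "(\<lambda>w. true_risk D (snd w)) \<in> borel_measurable (M \<Otimes>\<^sub>M HM)"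
      by (rule measurable_compose[OF measurable_snd u2m])
    have m3[measurable]: "(\<lambda>w. gD (emp_risk m (fst w) (snd w), true_risk D (snd w))) \<in> borel_measurable (M \<Otimes>\<^sub>M HM)"
    proof -
      have gDm': "gD \<in> borel_measurable (borel \<Otimes>\<^sub>M borel)" unfolding borel_prod by (rule gDm)
      show ?thesis by (rule measurable_compose[OF measurable_Pair[OF m1 m2] gDm'])
    qed
    have m4: "(\<lambda>w. ennreal (exp (m' * gD (emp_risk m (fst w) (snd w), true_risk D (snd w))))) \<in> borel_measurable (M \<Otimes>\<^sub>M HM)"
      by measurable
    have "(\<lambda>(S, f). G S f) \<in> borel_measurable (M \<Otimes>\<^sub>M HM)"
    proof (rule measurable_cong[THEN iffD1, OF _ m4])
      fix w assume "w \<in> space (M \<Otimes>\<^sub>M HM)"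
      then have "fst w \<in> space M" "snd w \<in> space HM" by (auto simp: space_pair_measure)
      then show "ennreal (exp (m' * gD (emp_risk m (fst w) (snd w), true_risk D (snd w)))) = (\<lambda>(S, f). G S f) w"
        using gD u1_range u2_range by (simp add: G_def case_prod_unfold)
    qed
    thus ?thesis by (simp add: measurable_cong_sets[OF sets_pair_measure_cong[OF refl setsP] refl])
  qed
  have Fm: "F \<in> borel_measurable M"
    unfolding F_def by (rule Pp.borel_measurable_nn_integral) (use Gm in simp)
  have key: "ennreal (exp (m' * Dv (gibbs_risk (density \<mu> (\<lambda>x. ennreal (q x))) (emp_risk m S))
                (gibbs_risk (density \<mu> (\<lambda>x. ennreal (q x))) (true_risk D)))) \<le> F S"
    if S: "S \<in> space M" and qm: "q \<in> borel_measurable HM" and qn: "\<forall>f\<in>space HM. 0 \<le> q f"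
      and Qp: "prob_space (density \<mu> (\<lambda>x. ennreal (q x)))" and al: "aligned (space HM) q p" for S q
  proof -
    define Q where "Q = density \<mu> (\<lambda>x. ennreal (q x))"
    have Qps: "prob_space Q" unfolding Q_def by (rule Qp)
    interpret Qp: prob_space Q by (rule Qps)
    have setsQ: "sets Q = sets HM" unfolding Q_def using \<mu>_sets by simp
    have spQ: "space Q = space HM" using setsQ by (rule sets_eq_imp_space_eq)
    define v1 where "v1 = (\<lambda>f. emp_risk m S f)"
    define v2 where "v2 = (\<lambda>f. true_risk D f)"
    have v1m: "v1 \<in> borel_measurable HM"
      using measurable_compose[OF measurable_Pair1'[OF S] joint1] by (simp add: v1_def)
    have v2m: "v2 \<in> borel_measurable HM" using u2m by (simp add: v2_def)
    have v1mQ[measurable]: "v1 \<in> borel_measurable Q" using v1m by (simp add: measurable_cong_sets[OF setsQ refl])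
    have v2mQ[measurable]: "v2 \<in> borel_measurable Q" using v2m by (simp add: measurable_cong_sets[OF setsQ refl])
    have v1r: "\<forall>f\<in>space Q. v1 f \<in> {0..1}" using u1_range[OF S] spQ by (simp add: v1_def)
    have v2r: "\<forall>f\<in>space Q. v2 f \<in> {0..1}" using u2_range spQ by (simp add: v2_def)
    define a where "a = integral\<^sup>L Q v1"
    define b where "b = integral\<^sup>L Q v2"
    have iv1: "integrable Q v1" by (rule Qp.integrable_const_bound[where B=1]) (use v1r v1mQ in auto)
    have iv2: "integrable Q v2" by (rule Qp.integrable_const_bound[where B=1]) (use v2r v2mQ in auto)
    have a01: "a \<in> {0..1}"
    proof -
      have "0 \<le> a" unfolding a_def by (rule integral_nonneg_AE) (use v1r in auto)
      moreover have "a \<le> 1" unfolding a_def by (rule Qp.integral_le_const[OF iv1]) (use v1r in auto)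
      ultimately show ?thesis by simp
    qed
    have b01: "b \<in> {0..1}"
    proof -
      have "0 \<le> b" unfolding b_def by (rule integral_nonneg_AE) (use v2r in auto)
      moreover have "b \<le> 1" unfolding b_def by (rule Qp.integral_le_const[OF iv2]) (use v2r in auto)
      ultimately show ?thesis by simp
    qed
    define Ka where "Ka = (if a = 0 \<or> a = 1 then {a} else {0..1::real})"
    define Kb where "Kb = (if b = 0 \<or> b = 1 then {b} else {0..1::real})"
    obtain c0 c1 c2 where c_eq: "c0 + c1 * a + c2 * b = Dv a b"
      and c_le: "\<forall>x\<in>Ka. \<forall>y\<in>Kb. c0 + c1 * x + c2 * y \<le> Dv x y"
      using minorant[OF Dv_convex a01 b01] unfolding Ka_def Kb_def by blast
    have AEa: "AE f in Q. v1 f \<in> Ka" using AE_face[OF Qps v1mQ v1r] unfolding Ka_def a_def .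
    have AEb: "AE f in Q. v2 f \<in> Kb" using AE_face[OF Qps v2mQ v2r] unfolding Kb_def b_def .
    have Ka_b[measurable]: "Ka \<in> sets borel" by (simp add: Ka_def)
    have Kb_b[measurable]: "Kb \<in> sets borel" by (simp add: Kb_def)
    define l where "l = (\<lambda>f. c0 + c1 * v1 f + c2 * v2 f)"
    have lm[measurable]: "l \<in> borel_measurable Q" unfolding l_def by measurable
    define B where "B = \<bar>c0\<bar> + \<bar>c1\<bar> + \<bar>c2\<bar>"
    have lb: "\<bar>l f\<bar> \<le> B" if f: "f \<in> space Q" for f
    proof -
      have "\<bar>c1 * v1 f\<bar> \<le> \<bar>c1\<bar>" using v1r f by (auto simp: abs_mult intro: mult_left_le)
      moreover have "\<bar>c2 * v2 f\<bar> \<le> \<bar>c2\<bar>" using v2r f by (auto simp: abs_mult intro: mult_left_le)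
      ultimately show ?thesis unfolding l_def B_def by linarith
    qed
    have il: "integrable Q l" by (rule Qp.integrable_const_bound[where B=B]) (use lb lm in auto)
    have el: "integral\<^sup>L Q l = Dv a b"
      unfolding l_def using iv1 iv2 c_eq by (simp add: a_def b_def Qp.prob_space)
    have iel: "integrable Q (\<lambda>f. exp (m' * l f))"
    proof (rule Qp.integrable_const_bound[where B="exp (m' * B)"])
      show "AE f in Q. norm (exp (m' * l f)) \<le> exp (m' * B)"
        using lb m'_pos by (auto intro!: AE_I2 mult_left_mono simp: abs_le_iff)
    qed measurable
    have jen: "exp (m' * integral\<^sup>L Q l) \<le> integral\<^sup>L Q (\<lambda>f. exp (m' * l f))"
      by (rule Qp.jensens_inequality[where I=UNIV and q="\<lambda>x. exp (m' * x)"])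
         (use il iel convex_on_exp[of m'] m'_pos in auto)
    define e' where "e' = (\<lambda>f. max (if v1 f \<in> Ka \<and> v2 f \<in> Kb then ennreal (exp (m' * (c0 + c1 * v1 f + c2 * v2 f))) else 0)
        (if 1 - v1 f \<in> Ka \<and> 1 - v2 f \<in> Kb then ennreal (exp (m' * (c0 + c1 * (1 - v1 f) + c2 * (1 - v2 f)))) else 0))"
    have e'mQ: "e' \<in> borel_measurable Q" unfolding e'_def by measurable
    have e'm: "e' \<in> borel_measurable HM" using e'mQ by (simp add: measurable_cong_sets[OF setsQ refl])
    have e'sym: "\<forall>f\<in>space HM. e' (\<lambda>x. - f x) = e' f"
      by (auto simp: e'_def v1_def v2_def u1_neg u2_neg max.commute)
    have st1: "ennreal (exp (m' * Dv a b)) \<le> ennreal (integral\<^sup>L Q (\<lambda>f. exp (m' * l f)))"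
      using jen el by (intro ennreal_leI) simp
    have st2: "ennreal (integral\<^sup>L Q (\<lambda>f. exp (m' * l f))) = (\<integral>\<^sup>+ f. ennreal (exp (m' * l f)) \<partial>Q)"
      by (rule nn_integral_eq_integral[symmetric]) (use iel in auto)
    have st3: "(\<integral>\<^sup>+ f. ennreal (exp (m' * l f)) \<partial>Q) \<le> (\<integral>\<^sup>+ f. e' f \<partial>Q)"
      using AEa AEb
    proof (intro nn_integral_mono_AE, eventually_elim)
      case (elim f)
      thus ?case by (simp add: e'_def l_def)
    qed
    have st4: "(\<integral>\<^sup>+ f. e' f \<partial>Q) = (\<integral>\<^sup>+ f. e' f \<partial>P)"
      unfolding Q_def P_def
      by (rule sym_nn_integral[OF c_meas \<mu>_sets \<mu>_inv p_meas p_nonneg qm qn al e'm e'sym])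
    have st5: "(\<integral>\<^sup>+ f. e' f \<partial>P) \<le> F S"
      unfolding F_def
    proof (rule nn_integral_mono)
      fix f assume "f \<in> space P"
      hence f: "f \<in> space HM" using spP by simp
      have r1: "v1 f \<in> {0..1}" "v2 f \<in> {0..1}" using v1r v2r f spQ by auto
      have b1: "ennreal (exp (m' * (c0 + c1 * v1 f + c2 * v2 f))) \<le> G S f" if "v1 f \<in> Ka" "v2 f \<in> Kb"
      proof -
        have "c0 + c1 * v1 f + c2 * v2 f \<le> Dv (v1 f) (v2 f)" using c_le that by blast
        thus ?thesis unfolding G_def v1_def v2_def by (rule expm[unfolded v1_def v2_def])
      qed
      have b2: "ennreal (exp (m' * (c0 + c1 * (1 - v1 f) + c2 * (1 - v2 f)))) \<le> G S f"
        if "1 - v1 f \<in> Ka" "1 - v2 f \<in> Kb"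
      proof -
        have "c0 + c1 * (1 - v1 f) + c2 * (1 - v2 f) \<le> Dv (1 - v1 f) (1 - v2 f)" using c_le that by blast
        also have "\<dots> = Dv (v1 f) (v2 f)" using Dv_sym r1 by (metis (no_types, lifting))
        finally have "c0 + c1 * (1 - v1 f) + c2 * (1 - v2 f) \<le> Dv (v1 f) (v2 f)" .
        thus ?thesis unfolding G_def v1_def v2_def by (rule expm[unfolded v1_def v2_def])
      qed
      show "e' f \<le> G S f" using b1 b2 by (auto simp: e'_def)
    qed
    have "ennreal (exp (m' * Dv a b)) \<le> F S"
      using st1 st2 st3 st4 st5 by (metis order_trans)
    thus ?thesis by (simp add: gibbs_risk_def a_def b_def Q_def v1_def v2_def)
  qed
  define E where "E = (\<integral>\<^sup>+ S. F S \<partial>M)"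
  have Eeq: "(\<integral>\<^sup>+ S'. (\<integral>\<^sup>+ f. ennreal (exp (m' * Dv (emp_risk m S' f) (true_risk D f)))
                                  \<partial>(density \<mu> (\<lambda>x. ennreal (p x)))) \<partial>M) = E"
    by (simp add: E_def F_def G_def P_def)
  show ?thesis
    unfolding Let_def M_def[symmetric] Eeq
  proof (cases "E = \<top>")
    case True
    show "\<exists>A\<in>sets M. 1 - \<delta> \<le> measure M A \<and>
      (\<forall>S\<in>A. \<forall>q. q \<in> borel_measurable HM \<and> (\<forall>f\<in>space HM. 0 \<le> q f) \<and>
         prob_space (density \<mu> (\<lambda>x. ennreal (q x))) \<and> aligned (space HM) q p \<longrightarrow>
         E = \<top> \<or> Dv (gibbs_risk (density \<mu> (\<lambda>x. ennreal (q x))) (emp_risk m S))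
                   (gibbs_risk (density \<mu> (\<lambda>x. ennreal (q x))) (true_risk D))
                 \<le> 1 / m' * ln (1 / \<delta> * enn2real E))"
      by (rule bexI[of _ "space M"]) (use True \<delta>_pos in \<open>auto simp: Mp.prob_space\<close>)
  next
    case False
    obtain e where e: "E = ennreal e" "0 \<le> e" using False by (cases E) auto
    define A where "A = {S \<in> space M. ennreal \<delta> * F S \<le> E}"
    have A_sets: "A \<in> sets M" unfolding A_def using Fm by measurable
    define Bs where "Bs = space M - A"
    have Bs_sets: "Bs \<in> sets M" unfolding Bs_def using A_sets by auto
    have Bs_eq: "Bs = {S \<in> space M. E < ennreal \<delta> * F S}" unfolding Bs_def A_def by auto
    have mB: "measure M Bs \<le> \<delta>"
    proof (cases "e = 0")
      case True
      have "AE S in M. F S = 0" using nn_integral_0_iff_AE[OF Fm] True e by (simp add: E_def)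
      moreover have N: "{S \<in> space M. F S \<noteq> 0} \<in> sets M" using Fm by measurable
      ultimately have "emeasure M {S \<in> space M. F S \<noteq> 0} = 0"
        using AE_iff_measurable[OF N] by auto
      moreover have "emeasure M Bs \<le> emeasure M {S \<in> space M. F S \<noteq> 0}"
        by (rule emeasure_mono) (auto simp: Bs_eq N)
      ultimately have "emeasure M Bs = 0" by simp
      thus ?thesis using \<delta>_pos by (simp add: Mp.emeasure_eq_measure)
    next
      case False
      hence ep: "0 < e" using e by simp
      have "E * emeasure M Bs = (\<integral>\<^sup>+ S. E * indicator Bs S \<partial>M)"
        using Bs_sets by (simp add: nn_integral_cmult_indicator)
      also have "\<dots> \<le> (\<integral>\<^sup>+ S. ennreal \<delta> * F S \<partial>M)"
        by (rule nn_integral_mono) (auto simp: Bs_eq indicator_def less_imp_le)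
      also have "\<dots> = ennreal \<delta> * E"
        unfolding E_def by (rule nn_integral_cmult) (rule Fm)
      finally have "ennreal (e * measure M Bs) \<le> ennreal (\<delta> * e)"
        using e \<delta>_pos by (simp add: Mp.emeasure_eq_measure ennreal_mult')
      hence "e * measure M Bs \<le> \<delta> * e" using ep \<delta>_pos by (simp add: ennreal_le_iff)
      thus ?thesis using ep by (simp add: mult.commute[of \<delta>])
    qed
    have mA: "1 - \<delta> \<le> measure M A"
    proof -
      have "A = space M - Bs" unfolding Bs_def using A_sets sets.sets_into_space by auto
      hence "measure M A = 1 - measure M Bs" using Mp.prob_compl[OF Bs_sets] by simp
      thus ?thesis using mB by simp
    qed
    show "\<exists>A\<in>sets M. 1 - \<delta> \<le> measure M A \<and>
      (\<forall>S\<in>A. \<forall>q. q \<in> borel_measurable HM \<and> (\<forall>f\<in>space HM. 0 \<le> q f) \<and>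
         prob_space (density \<mu> (\<lambda>x. ennreal (q x))) \<and> aligned (space HM) q p \<longrightarrow>
         E = \<top> \<or> Dv (gibbs_risk (density \<mu> (\<lambda>x. ennreal (q x))) (emp_risk m S))
                   (gibbs_risk (density \<mu> (\<lambda>x. ennreal (q x))) (true_risk D))
                 \<le> 1 / m' * ln (1 / \<delta> * enn2real E))"
    proof (intro bexI[of _ A] conjI ballI allI impI disjI2)
      show "1 - \<delta> \<le> measure M A" by (rule mA)
      show "A \<in> sets M" by (rule A_sets)
      fix S q
      assume S: "S \<in> A" and qc: "q \<in> borel_measurable HM \<and> (\<forall>f\<in>space HM. 0 \<le> q f) \<and>
         prob_space (density \<mu> (\<lambda>x. ennreal (q x))) \<and> aligned (space HM) q p"
      define d where "d = Dv (gibbs_risk (density \<mu> (\<lambda>x. ennreal (q x))) (emp_risk m S))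
                   (gibbs_risk (density \<mu> (\<lambda>x. ennreal (q x))) (true_risk D))"
      have SM: "S \<in> space M" and SF: "ennreal \<delta> * F S \<le> E" using S by (auto simp: A_def)
      have k: "ennreal (exp (m' * d)) \<le> F S" unfolding d_def using key[OF SM] qc by blast
      have "ennreal \<delta> * ennreal (exp (m' * d)) \<le> ennreal \<delta> * F S" using k by (rule mult_left_mono) simp
      also have "\<dots> \<le> ennreal e" using SF e by simp
      finally have "ennreal (\<delta> * exp (m' * d)) \<le> ennreal e" using \<delta>_pos by (simp add: ennreal_mult')
      hence le: "\<delta> * exp (m' * d) \<le> e" using e by (simp add: ennreal_le_iff)
      hence le2: "exp (m' * d) \<le> 1 / \<delta> * e" using \<delta>_pos by (simp add: field_simps)
      have pos: "0 < 1 / \<delta> * e" using le2 by (smt (verit) exp_gt_zero)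
      have "m' * d \<le> ln (1 / \<delta> * e)" using le2 pos by (simp add: ln_ge_iff)
      hence "d \<le> ln (1 / \<delta> * e) / m'" using m'_pos by (simp add: field_simps)
      thus "d \<le> 1 / m' * ln (1 / \<delta> * enn2real E)" using e by simp
    qed
  qed
qed

end
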